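(* (1) If $0<t<7$, $t\ne1$, $0<u<\mu_A(t)$ and $u\ne\frac{3(t-1)^2(t+2)}{2t+1}$, then $\mathfrak{e}^A_{t,u}(a^2,b^2,c^2)\notin\Sigma_{3,10}$. (2) If $t>2$, $\mu_B(t)<u<1$ and $b^B_1(t,\omega(u))\ne0$, where $b^B_1(t,w)=(2t+1)w-t(t-4)$, then $\mathfrak{e}^B_{t,u}(a^2,b^2,c^2)\notin\Sigma_{3,10}$.
   Context: Let $a,b,c$ be variables. For nonnegative integers $m,n$ put $S_{m,n}=a^mb^n+b^mc^n+c^ma^n$, $S_n=S_{n,0}=a^n+b^n+c^n$, $T_{m,n}=S_{m,n}+S_{n,m}$, $U=abc$ (so $S_{1,1}=ab+bc+ca$). Put $s_0=S_5-US_{1,1}$, $s_1=T_{4,1}-2US_{1,1}$, $s_2=T_{3,2}-2US_{1,1}$, $s_3=US_2-US_{1,1}$, $s_4=US_{1,1}$. $\Sigma_{3,10}$ denotes the cone of real ternary forms of degree 10 that are sums of squares of real ternary quintic forms. Auxiliary functions: $\mu_L(t)=9(t-1)^2$, $\mu_H(t)=(t+2)(7-t)$, $\mu_A(t)=\min\{\mu_L(t),\mu_H(t)\}$, $\mu_R(t)=2-t^2+t\sqrt{(t-1)(t+2)}$, $\mu_B(t)=\tfrac12\big(\mu_R(t)-\sqrt{\mu_R(t)^2-4}\big)$ (for $t\ge2$), $\omega(u)=u+\frac1u-2$. Family A: for $u>0$, $\mathfrak{e}^A_{t,u}=s_0+\sum_{i=1}^4p^A_i(t,u)s_i$ where $p^A_1=\dfrac{u^2-(t+2)(5t^2+t+9)u+9(t-1)^2(t+2)^2}{(5t+1)(t+2)u}$,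 $p^A_2=\dfrac{-t^2u^3+(t-1)(7t^3-t^2+11t+1)u^2+(t+2)(17t^5-25t^4+199t^3-59t^2+76t+8)u+9(t-1)^4(t+2)^2(t^2-12t-1)}{(5t+1)^3(t+2)u}$, $p^A_3=\dfrac{(2t^3+4t^2+5t+1)u^3-2(t+2)(7t^4+42t^3+37t^2+48t+10)u^2+(t+2)^2(91t^5+125t^4+682t^3+182t^2+523t+125)u-18(t-1)^2(t+2)^3(t^4+36t^3+34t^2+60t+13)}{(t+2)^2(5t+1)^3u}$, $p^A_4=\dfrac{(t-1)^3(6t^2+6t-12+u)^3}{(t+2)^2(5t+1)^3u}$. Family B: with $p^B_1(t,w)=-2w-3$, $p^B_2(t,w)=w^2+2w+2$, $p^B_3(t,w)=-\frac{2t^3+4t^2+5t+1}{t^2(t+2)}w^2+\frac{2(4t^2+5t+3)}{t+2}w-\frac{3t^3-7t^2-12t-8}{t+2}$, $p^B_4(t,w)=\frac{(t-1)^3(-w^2-2t^2w+t^2(t-2))}{t^2(t+2)}$, put $\mathfrak{e}^B_{t,u}=s_0+\sum_{i=1}^4p^B_i(t,\omega(u))s_i$. *)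

theory Defs
  imports Complex_Main
begin

definition S :: "nat \<Rightarrow> nat \<Rightarrow> real \<Rightarrow> real \<Rightarrow> real \<Rightarrow> real" where
  "S m n a b c = a^m * b^n + b^m * c^n + c^m * a^n"

definition T :: "nat \<Rightarrow> nat \<Rightarrow> real \<Rightarrow> real \<Rightarrow> real \<Rightarrow> real" where
  "T m n a b c = S m n a b c + S n m a b c"

definition U :: "real \<Rightarrow> real \<Rightarrow> real \<Rightarrow> real" where
  "U a b c = a * b * c"

definition sfam :: "nat \<Rightarrow> real \<Rightarrow> real \<Rightarrow> real \<Rightarrow> real" where
  "sfam i a b c =
    (if i = 0 then S 5 0 a b c - U a b c * S 1 1 a b c
     else if i = 1 then T 4 1 a b c - 2 * U a b c * S 1 1 a b c
     else if i = 2 then T 3 2 a b c - 2 * U a b c * S 1 1 a b c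
     else if i = 3 then U a b c * S 2 0 a b c - U a b c * S 1 1 a b c
     else U a b c * S 1 1 a b c)"

definition muL :: "real \<Rightarrow> real" where "muL t = 9 * (t - 1)^2"
definition muH :: "real \<Rightarrow> real" where "muH t = (t + 2) * (7 - t)"
definition muA :: "real \<Rightarrow> real" where "muA t = min (muL t) (muH t)"
definition muR :: "real \<Rightarrow> real" where
  "muR t = 2 - t^2 + t * sqrt ((t - 1) * (t + 2))"
definition muB :: "real \<Rightarrow> real" where
  "muB t = (muR t - sqrt ((muR t)^2 - 4)) / 2"
definition omega :: "real \<Rightarrow> real" where "omega u = u + 1 / u - 2"

definition pA1 :: "real \<Rightarrow> real \<Rightarrow> real" where
  "pA1 t u = (u^2 - (t + 2) * (5*t^2 + t + 9) * u + 9 * (t - 1)^2 * (t + 2)^2)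
             / ((5*t + 1) * (t + 2) * u)"

definition pA2 :: "real \<Rightarrow> real \<Rightarrow> real" where
  "pA2 t u = (- (t^2) * u^3 + (t - 1) * (7*t^3 - t^2 + 11*t + 1) * u^2
      + (t + 2) * (17*t^5 - 25*t^4 + 199*t^3 - 59*t^2 + 76*t + 8) * u
      + 9 * (t - 1)^4 * (t + 2)^2 * (t^2 - 12*t - 1))
     / ((5*t + 1)^3 * (t + 2) * u)"

definition pA3 :: "real \<Rightarrow> real \<Rightarrow> real" where
  "pA3 t u = ((2*t^3 + 4*t^2 + 5*t + 1) * u^3
      - 2 * (t + 2) * (7*t^4 + 42*t^3 + 37*t^2 + 48*t + 10) * u^2
      + (t + 2)^2 * (91*t^5 + 125*t^4 + 682*t^3 + 182*t^2 + 523*t + 125) * u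
      - 18 * (t - 1)^2 * (t + 2)^3 * (t^4 + 36*t^3 + 34*t^2 + 60*t + 13))
     / ((t + 2)^2 * (5*t + 1)^3 * u)"

definition pA4 :: "real \<Rightarrow> real \<Rightarrow> real" where
  "pA4 t u = ((t - 1)^3 * (6*t^2 + 6*t - 12 + u)^3) / ((t + 2)^2 * (5*t + 1)^3 * u)"

definition eA :: "real \<Rightarrow> real \<Rightarrow> real \<Rightarrow> real \<Rightarrow> real \<Rightarrow> real" where
  "eA t u a b c = sfam 0 a b c + pA1 t u * sfam 1 a b c + pA2 t u * sfam 2 a b c
                  + pA3 t u * sfam 3 a b c + pA4 t u * sfam 4 a b c"

definition pB1 :: "real \<Rightarrow> real \<Rightarrow> real" where "pB1 t w = - 2 * w - 3"
definition pB2 :: "real \<Rightarrow> real \<Rightarrow> real" where "pB2 t w = w^2 + 2 * w + 2"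
definition pB3 :: "real \<Rightarrow> real \<Rightarrow> real" where
  "pB3 t w = - ((2*t^3 + 4*t^2 + 5*t + 1) / (t^2 * (t + 2))) * w^2
             + (2 * (4*t^2 + 5*t + 3) / (t + 2)) * w
             - (3*t^3 - 7*t^2 - 12*t - 8) / (t + 2)"
definition pB4 :: "real \<Rightarrow> real \<Rightarrow> real" where
  "pB4 t w = ((t - 1)^3 * (- (w^2) - 2 * t^2 * w + t^2 * (t - 2))) / (t^2 * (t + 2))"

definition eB :: "real \<Rightarrow> real \<Rightarrow> real \<Rightarrow> real \<Rightarrow> real \<Rightarrow> real" where
  "eB t u a b c = (let w = omega u in
      sfam 0 a b c + pB1 t w * sfam 1 a b c + pB2 t w * sfam 2 a b c
      + pB3 t w * sfam 3 a b c + pB4 t w * sfam 4 a b c)"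

definition bB1 :: "real \<Rightarrow> real \<Rightarrow> real" where "bB1 t w = (2*t + 1) * w - t * (t - 4)"

definition ternary_form :: "nat \<Rightarrow> (real \<Rightarrow> real \<Rightarrow> real \<Rightarrow> real) \<Rightarrow> bool" where
  "ternary_form d q \<longleftrightarrow> (\<exists>coef :: nat \<Rightarrow> nat \<Rightarrow> real. \<forall>a b c.
      q a b c = (\<Sum>i\<le>d. \<Sum>j\<le>d - i. coef i j * a^i * b^j * c^(d - i - j)))"

definition Sigma_3_10 :: "(real \<Rightarrow> real \<Rightarrow> real \<Rightarrow> real) \<Rightarrow> bool" where
  "Sigma_3_10 F \<longleftrightarrow> (\<exists>qs. (\<forall>q\<in>set qs. ternary_form 5 q) \<and>
      (\<forall>a b c. F a b c = (\<Sum>q\<leftarrow>qs. (q a b c)^2)))"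

end

theory Submission imports Defs begin

definition hq :: "(nat \<Rightarrow> nat \<Rightarrow> real) \<Rightarrow> real \<Rightarrow> real \<Rightarrow> real \<Rightarrow> real" where
  "hq cf a b c = cf 5 0 * a^2 + cf 3 2 * a*b + cf 3 0 * a*c + cf 1 4 * b^2 + cf 1 2 * b*c + cf 1 0 * c^2"

lemma sum_expand:
  "(\<Sum>i\<le>5. \<Sum>j\<le>5 - i. cf i j * x^i * y^j * z^(5 - i - j)::real) =
    cf 0 0 * z^5 + cf 0 1 * y * z^4 + cf 0 2 * y^2*z^3 + cf 0 3 * y^3*z^2 + cf 0 4 * y^4 * z + cf 0 5 * y^5
  + cf 1 0 * x * z^4 + cf 1 1 * x*y*z^3 + cf 1 2 * x*y^2*z^2 + cf 1 3 * x*y^3*z + cf 1 4 * x*y^4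
  + cf 2 0 * x^2*z^3 + cf 2 1 * x^2*y*z^2 + cf 2 2 * x^2*y^2*z + cf 2 3 * x^2*y^3
  + cf 3 0 * x^3*z^2 + cf 3 1 * x^3*y*z + cf 3 2 * x^3*y^2
  + cf 4 0 * x^4*z + cf 4 1 * x^4*y + cf 5 0 * x^5"
  by (simp add: numeral_eq_Suc atMost_Suc algebra_simps)

lemma Kid:
  fixes q :: "real \<Rightarrow> real \<Rightarrow> real \<Rightarrow> real"
  assumes "\<forall>x y z. q x y z = (\<Sum>i\<le>5. \<Sum>j\<le>5 - i. cf i j * x^i * y^j * z^(5 - i - j))"
  shows "q X Y Z + q X (-Y) Z + q X Y (-Z) + q X (-Y) (-Z)
       - q (-X) Y Z - q (-X) (-Y) Z - q (-X) Y (-Z) - q (-X) (-Y) (-Z)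
       = 8 * X * hq cf (X^2) (Y^2) (Z^2)"
proof -
  have e: "\<And>x y z. q x y z = cf 0 0 * z^5 + cf 0 1 * y * z^4 + cf 0 2 * y^2*z^3 + cf 0 3 * y^3*z^2 + cf 0 4 * y^4 * z + cf 0 5 * y^5
  + cf 1 0 * x * z^4 + cf 1 1 * x*y*z^3 + cf 1 2 * x*y^2*z^2 + cf 1 3 * x*y^3*z + cf 1 4 * x*y^4
  + cf 2 0 * x^2*z^3 + cf 2 1 * x^2*y*z^2 + cf 2 2 * x^2*y^2*z + cf 2 3 * x^2*y^3
  + cf 3 0 * x^3*z^2 + cf 3 1 * x^3*y*z + cf 3 2 * x^3*y^2
  + cf 4 0 * x^4*z + cf 4 1 * x^4*y + cf 5 0 * x^5"
    using assms sum_expand by simp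
  show ?thesis unfolding e hq_def by algebra
qed


lemma fe: "(b::real) \<noteq> 0 \<Longrightarrow> d \<noteq> 0 \<Longrightarrow> a*d = c*b \<Longrightarrow> a/b = c/d" by (simp add: frac_eq_eq)

definition DA :: "real \<Rightarrow> real \<Rightarrow> real" where "DA t u = (t+2)^2*(5*t+1)^3*u"
definition nA1 where "nA1 t u = (t+2)*(5*t+1)^2*(u^2 - (t + 2) * (5*t^2 + t + 9) * u + 9 * (t - 1)^2 * (t + 2)^2)"
definition nA2 where "nA2 t u = (t+2)*(- (t^2) * u^3 + (t - 1) * (7*t^3 - t^2 + 11*t + 1) * u^2
      + (t + 2) * (17*t^5 - 25*t^4 + 199*t^3 - 59*t^2 + 76*t + 8) * u
      + 9 * (t - 1)^4 * (t + 2)^2 * (t^2 - 12*t - 1))"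
definition nA3 where "nA3 t u = ((2*t^3 + 4*t^2 + 5*t + 1) * u^3
      - 2 * (t + 2) * (7*t^4 + 42*t^3 + 37*t^2 + 48*t + 10) * u^2
      + (t + 2)^2 * (91*t^5 + 125*t^4 + 682*t^3 + 182*t^2 + 523*t + 125) * u
      - 18 * (t - 1)^2 * (t + 2)^3 * (t^4 + 36*t^3 + 34*t^2 + 60*t + 13))"
definition nA4 where "nA4 t u = (t - 1)^3 * (6*t^2 + 6*t - 12 + u)^3"
definition NA where "NA t u a b c = DA t u * sfam 0 a b c + nA1 t u * sfam 1 a b c + nA2 t u * sfam 2 a b c + nA3 t u * sfam 3 a b c + nA4 t u * sfam 4 a b c"

lemma eA_NA: assumes "t > 0" "u > 0" shows "eA t u a b c = NA t u a b c / DA t u"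
proof -
  have h: "5*t+1 \<noteq> 0" "t + 2 \<noteq> 0" "u \<noteq> 0" using assms by auto
  have d: "DA t u \<noteq> 0" unfolding DA_def using h by simp
  have 1: "pA1 t u = nA1 t u / DA t u" unfolding pA1_def nA1_def DA_def apply (rule fe) using h apply simp using h apply simp by algebra
  have 2: "pA2 t u = nA2 t u / DA t u" unfolding pA2_def nA2_def DA_def apply (rule fe) using h apply simp using h apply simp by algebra
  have 3: "pA3 t u = nA3 t u / DA t u" unfolding pA3_def nA3_def DA_def by simp
  have 4: "pA4 t u = nA4 t u / DA t u" unfolding pA4_def nA4_def DA_def by simp
  show ?thesis unfolding eA_def NA_def 1 2 3 4 using d by (simp add: field_simps)
qed

lemma NA1: "NA t u 1 1 t = 0"
  unfolding NA_def DA_def nA1_def nA2_def nA3_def nA4_def S_def T_def U_def by (simp add: sfam_def S_def T_def U_def) algebra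

lemma NA2: "NA t ((t+2)*(7-t-5*t*s-s)) s 1 1 = 0"
  unfolding NA_def DA_def nA1_def nA2_def nA3_def nA4_def S_def T_def U_def by (simp add: sfam_def S_def T_def U_def) algebra

definition DB :: "real \<Rightarrow> real" where "DB t = t^2*(t+2)"
definition NB where "NB t w a b c = DB t * sfam 0 a b c + DB t * (- 2 * w - 3) * sfam 1 a b c
   + DB t * (w^2 + 2 * w + 2) * sfam 2 a b c
   + (-(2*t^3 + 4*t^2 + 5*t + 1) * w^2 + 2 * (4*t^2 + 5*t + 3) * t^2 * w - (3*t^3 - 7*t^2 - 12*t - 8) * t^2) * sfam 3 a b c
   + (t - 1)^3 * (- (w^2) - 2 * t^2 * w + t^2 * (t - 2)) * sfam 4 a b c"

lemma eB_NB: assumes "t > 0" shows "eB t u a b c = NB t (omega u) a b c / DB t"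
proof -
  have h: "t \<noteq> 0" "t + 2 \<noteq> 0" using assms by auto
  have d: "DB t \<noteq> 0" unfolding DB_def using h by simp
  have 3: "pB3 t w = (-(2*t^3 + 4*t^2 + 5*t + 1) * w^2 + 2 * (4*t^2 + 5*t + 3) * t^2 * w - (3*t^3 - 7*t^2 - 12*t - 8) * t^2) / DB t" for w
  proof -
    have e1: "2 * (4*t^2 + 5*t + 3) / (t + 2) = 2 * (4*t^2 + 5*t + 3) * t^2 / DB t"
      unfolding DB_def using h by simp
    have e2: "(3*t^3 - 7*t^2 - 12*t - 8) / (t + 2) = (3*t^3 - 7*t^2 - 12*t - 8) * t^2 / DB t"
      unfolding DB_def using h by simp
    have e3: "(2*t^3 + 4*t^2 + 5*t + 1) / (t^2 * (t + 2)) = (2*t^3 + 4*t^2 + 5*t + 1) / DB t"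
      unfolding DB_def by simp
    show ?thesis unfolding pB3_def e1 e2 e3 using d by (simp add: field_simps)
  qed
  have 4: "pB4 t w = (t - 1)^3 * (- (w^2) - 2 * t^2 * w + t^2 * (t - 2)) / DB t" for w
    unfolding pB4_def DB_def by simp
  show ?thesis unfolding eB_def NB_def 3 4 Let_def pB1_def pB2_def using d by (simp add: field_simps)
qed

lemma NB1: "NB t w 1 1 t = 0"
  unfolding NB_def DB_def by (simp add: sfam_def S_def T_def U_def) algebra

lemma NB2: "w * u = (u - 1)^2 \<Longrightarrow> u^2 * NB t w 1 u 0 = 0"
  unfolding NB_def DB_def by (simp add: sfam_def S_def T_def U_def) algebra

lemma NB3: "w * u = (u - 1)^2 \<Longrightarrow> u^2 * NB t w u 1 0 = 0"
  unfolding NB_def DB_def by (simp add: sfam_def S_def T_def U_def) algebra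


lemma linA:
  fixes cf :: "nat \<Rightarrow> nat \<Rightarrow> real"
  assumes "hq cf 1 1 t = 0"
    "hq cf 1 t 1 = 0"
    "hq cf t 1 1 = 0"
    "hq cf s 1 1 = 0"
    "hq cf 1 s 1 = 0"
    "hq cf 1 1 s = 0"
  shows "(-((t-1)^2*(s-1)^2*(t-s)^3*(2*t*s+s+t-4))) * cf 5 0 = 0"
proof -
  have "(-((t-1)^2*(s-1)^2*(t-s)^3*(2*t*s+s+t-4))) * cf 5 0 = (t^3*s^3 - 3*t^3*s^2 + 3*t^3*s - t^3 - 2*t^2*s^4 + 5*t^2*s^3 - 3*t^2*s^2 - t^2*s + t^2 + t*s^5 - t*s^4 - 3*t*s^3 + 5*t*s^2 - 2*t*s - s^5 + 3*s^4 - 3*s^3 + s^2) * hq cf 1 1 t + (t^3*s^3 - 3*t^3*s^2 + 3*t^3*s - t^3 - 2*t^2*s^4 + 5*t^2*s^3 - 3*t^2*s^2 - t^2*s + t^2 + t*s^5 - t*s^4 - 3*t*s^3 + 5*t*s^2 - 2*t*s - s^5 + 3*s^4 - 3*s^3 + s^2) * hq cf 1 t 1 + (0 - 2*t^4*s^3 + 3*t^4*s^2 - t^4 + 4*t^3*s^4 - 4*t^3*s^3 - 4*t^3*s + 4*t^3 - 2*t^2*s^5 - t^2*s^4 + 8*t^2*s^2 - 2*t^2*s - 3*t^2 + 2*t*s^5 - 8*t*s^2 + 6*t*s - 3*s^4 + 6*s^3 - 3*s^2) * hq cf t 1 1 + (2*t^5*s^2 - 2*t^5*s - 4*t^4*s^3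 + t^4*s^2 + 3*t^4 + 2*t^3*s^4 + 4*t^3*s^3 - 6*t^3 - 3*t^2*s^4 - 8*t^2*s^2 + 8*t^2*s + 3*t^2 + 4*t*s^3 + 2*t*s^2 - 6*t*s + s^4 - 4*s^3 + 3*s^2) * hq cf s 1 1 + (0 - t^5*s + t^5 + 2*t^4*s^2 + t^4*s - 3*t^4 - t^3*s^3 - 5*t^3*s^2 + 3*t^3*s + 3*t^3 + 3*t^2*s^3 + 3*t^2*s^2 - 5*t^2*s - t^2 - 3*t*s^3 + t*s^2 + 2*t*s + s^3 - s^2) * hq cf 1 s 1 + (0 - t^5*s + t^5 + 2*t^4*s^2 + t^4*s - 3*t^4 - t^3*s^3 - 5*t^3*s^2 + 3*t^3*s + 3*t^3 + 3*t^2*s^3 + 3*t^2*s^2 - 5*t^2*s - t^2 - 3*t*s^3 + t*s^2 + 2*t*s + s^3 - s^2) * hq cf 1 1 s"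
    by (simp add: hq_def) algebra
  then show ?thesis using assms by simp
qed

lemma linB:
  fixes cf :: "nat \<Rightarrow> nat \<Rightarrow> real"
  assumes "hq cf 1 t 1 = 0"
    "hq cf t 1 1 = 0"
    "hq cf 1 u 0 = 0"
    "hq cf u 1 0 = 0"
    "hq cf 1 0 u = 0"
    "hq cf u 0 1 = 0"
  shows "((t-1)*u*(u+1)^2*(u-1)^2*((2*t+1)*(u-1)^2-t*(t-4)*u)) * cf 5 0 = 0"
proof -
  have "((t-1)*u*(u+1)^2*(u-1)^2*((2*t+1)*(u-1)^2-t*(t-4)*u)) * cf 5 0 = (u^6 - 2*u^4 + u^2) * hq cf 1 t 1 + (0 - t*u^6 + 2*t*u^4 - t*u^2) * hq cf t 1 1 + (0 - t^2*u^4 - t^2*u^3 + t^2*u^2 + t^2*u + t*u^4 + t*u^3 - t*u^2 - t*u) * hq cf 1 u 0 + (t^2*u^5 + t^2*u^4 - t^2*u^3 - t^2*u^2 - t*u^5 - t*u^4 + t*u^3 + t*u^2) * hq cf u 1 0 + (0 - t^2*u^3 + t^2*u + t*u^4 - t*u^2 - u^4 + u^3 + u^2 - u) * hq cf 1 0 u + (t^2*u^5 - t^2*u^3 - t*u^4 + t*u^2 - u^5 + u^4 + u^3 - u^2) * hq cf u 0 1"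
    by (simp add: hq_def) algebra
  then show ?thesis using assms by simp
qed

lemma vanish_sos:
  fixes qs :: "(real \<Rightarrow> real \<Rightarrow> real \<Rightarrow> real) list"
  assumes "(\<Sum>q\<leftarrow>qs. (q x y z)^2) = 0" "q \<in> set qs"
  shows "q x y z = 0"
proof -
  have "\<forall>v\<in>set (map (\<lambda>q. (q x y z)^2) qs). v = 0"
    using assms(1) by (subst sum_list_nonneg_eq_0_iff[symmetric]) auto
  then show ?thesis using assms(2) by auto
qed

lemma sl0: "(\<And>q. q \<in> set xs \<Longrightarrow> f q = 0) \<Longrightarrow> (\<Sum>q\<leftarrow>xs. f q) = (0::real)"
  by (induction xs) auto

lemma general_nonsos:
  fixes G :: "real \<Rightarrow> real \<Rightarrow> real \<Rightarrow> real" and Z :: "(real \<times> real \<times> real) set"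
  assumes G1: "G 1 0 0 \<noteq> 0"
  and lin: "\<And>cf. (\<And>a b c. (a,b,c) \<in> Z \<Longrightarrow> hq cf a b c = 0) \<Longrightarrow> cf 5 0 = 0"
  and Zp: "\<And>a b c. (a,b,c) \<in> Z \<Longrightarrow> a > 0 \<and> b \<ge> 0 \<and> c \<ge> 0 \<and> G a b c = 0"
  shows "\<not> Sigma_3_10 (\<lambda>x y z. G (x^2) (y^2) (z^2))"
proof
  assume "Sigma_3_10 (\<lambda>x y z. G (x^2) (y^2) (z^2))"
  then obtain qs where tf: "\<forall>q\<in>set qs. ternary_form 5 q"
    and eq: "\<forall>a b c. G (a^2) (b^2) (c^2) = (\<Sum>q\<leftarrow>qs. (q a b c)^2)"
    unfolding Sigma_3_10_def by blast
  have van: "q x y z = 0" if "q \<in> set qs" "G (x^2) (y^2) (z^2) = 0" for q x y z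
    using vanish_sos[where qs=qs and x=x and y=y and z=z and q=q] eq that by simp
  have c0: "q 1 0 0 = 0" if qin: "q \<in> set qs" for q
  proof -
    obtain cf where cf: "\<forall>x y z. q x y z = (\<Sum>i\<le>5. \<Sum>j\<le>5 - i. cf i j * x^i * y^j * z^(5 - i - j))"
      using tf qin unfolding ternary_form_def by blast
    have "cf 5 0 = 0"
    proof (rule lin)
      fix a b c assume abc: "(a,b,c) \<in> Z"
      with Zp have pos: "a > 0" "b \<ge> 0" "c \<ge> 0" and g0: "G a b c = 0" by auto
      define X where "X = sqrt a"
      define Y where "Y = sqrt b"
      define W where "W = sqrt c"
      have X2: "X^2 = a" "(-X)^2 = a" unfolding X_def using pos by simp_all
      have Y2: "Y^2 = b" "(-Y)^2 = b" unfolding Y_def using pos by simp_all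
      have W2: "W^2 = c" "(-W)^2 = c" unfolding W_def using pos by simp_all
      have Xp: "X > 0" unfolding X_def using pos by simp
      have z: "q x y w = 0" if "x = X \<or> x = -X" "y = Y \<or> y = -Y" "w = W \<or> w = -W" for x y w
      proof -
        have "G (x^2) (y^2) (w^2) = 0" using that X2 Y2 W2 g0 by auto
        then show ?thesis using van qin by blast
      qed
      have "8 * X * hq cf (X^2) (Y^2) (W^2) = 0"
        using Kid[OF cf, of X Y W] z by simp
      then show "hq cf a b c = 0" using Xp X2 Y2 W2 by simp
    qed
    moreover have "q 1 0 0 = cf 5 0" using cf sum_expand[of cf 1 0 0] by simp
    ultimately show ?thesis by simp
  qed
  have "G 1 0 0 = (\<Sum>q\<leftarrow>qs. (q 1 0 0)^2)" using eq[rule_format, of 1 0 0] by simp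
  also have "\<dots> = 0" using c0 sl0[of qs "\<lambda>q. (q 1 0 0)^2"] by simp
  finally show False using G1 by simp
qed


lemma eA_cyc: "eA t u a b c = eA t u b c a"
  unfolding eA_def sfam_def S_def T_def U_def by (simp add: algebra_simps)
lemma eB_cyc: "eB t u a b c = eB t u b c a"
  unfolding eB_def sfam_def S_def T_def U_def Let_def by (simp add: algebra_simps)

lemma partA:
  fixes t u :: real
  assumes t0: "0 < t" "t < 7" "t \<noteq> 1" and u0: "0 < u" "u < muA t"
    and ne: "u \<noteq> 3 * (t - 1)^2 * (t + 2) / (2 * t + 1)"
  shows "\<not> Sigma_3_10 (\<lambda>a b c. eA t u (a^2) (b^2) (c^2))"
proof -
  have uL: "u < 9*(t-1)^2" and uH: "u < (t+2)*(7-t)" using u0 unfolding muA_def muL_def muH_def by auto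
  define s where "s = ((t+2)*(7-t) - u)/((t+2)*(5*t+1))"
  have dpos: "(t+2)*(5*t+1) > 0" using t0 by simp
  have sd: "s*((t+2)*(5*t+1)) = (t+2)*(7-t) - u" using dpos t0 unfolding s_def by auto
  have us: "u = (t+2)*(7-t-5*t*s-s)" using sd by algebra
  have sp: "s > 0" unfolding s_def using uH dpos by simp
  have s1: "s \<noteq> 1"
  proof
    assume "s = 1"
    then have uu: "u = (t+2)*(6-6*t)" using us by simp
    have tl: "t < 1"
    proof (rule ccontr)
      assume "\<not> t < 1"
      then have "(t+2)*(6-6*t) \<le> 0" using t0 by (intro mult_nonneg_nonpos) auto
      then show False using uu u0 by simp
    qed
    have "(t+2)*(6-6*t) - 9*(t-1)^2 = (1-t)*(15*t+3)" by algebra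
    moreover have "(1-t)*(15*t+3) > 0" using tl t0 by simp
    ultimately show False using uu uL by simp
  qed
  have st: "s \<noteq> t"
  proof
    assume st': "s = t"
    have "u = (t+2)*(7-t-5*t*t-t)" using us st' by simp
    also have "\<dots> = (t+2)*((1-t)*(5*t+7))" by algebra
    finally have uu: "u = (t+2)*((1-t)*(5*t+7))" .
    have tl: "t < 1"
    proof (rule ccontr)
      assume "\<not> t < 1"
      then have a: "(1-t)*(5*t+7) \<le> 0" using t0 by (intro mult_nonpos_nonneg) auto
      have "(t+2)*((1-t)*(5*t+7)) \<le> 0" using a t0 by (simp add: mult_nonneg_nonpos)
      then show False using uu u0 by simp
    qed
    have "(t+2)*((1-t)*(5*t+7)) - 9*(t-1)^2 = (1-t)*(5*t^2+26*t+5)" by algebra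
    moreover have "(1-t)*(5*t^2+26*t+5) > 0" using tl t0 by (intro mult_pos_pos) (auto simp: add_pos_pos)
    ultimately show False using uu uL by simp
  qed
  have sx: "2*t*s+s+t-4 \<noteq> 0"
  proof
    assume h: "2*t*s+s+t-4 = 0"
    have "u*(2*t+1) = 3*(t-1)^2*(t+2)" using h us by algebra
    moreover have "2*t+1 > 0" using t0 by simp
    ultimately have "u = 3*(t-1)^2*(t+2)/(2*t+1)" by (simp add: eq_divide_eq)
    then show False using ne by simp
  qed
  have Dne: "-((t-1)^2*(s-1)^2*(t-s)^3*(2*t*s+s+t-4)) \<noteq> 0" using t0 s1 st sx by simp
  have z1: "eA t u 1 1 t = 0" using eA_NA[OF t0(1) u0(1)] NA1 by simp
  have z2: "eA t u s 1 1 = 0" using eA_NA[OF t0(1) u0(1)] NA2[of t s] us by simp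
  have z3: "eA t u 1 t 1 = 0" "eA t u t 1 1 = 0" using z1 eA_cyc[of t u 1 t 1] eA_cyc[of t u t 1 1] by simp_all
  have z4: "eA t u 1 s 1 = 0" "eA t u 1 1 s = 0" using z2 eA_cyc[of t u 1 s 1] eA_cyc[of t u 1 1 s] by simp_all
  show ?thesis
  proof (rule general_nonsos[where Z = "{(1,1,t),(1,t,1),(t,1,1),(s,1,1),(1,s,1),(1,1,s)}"])
    show "eA t u 1 0 0 \<noteq> 0" by (simp add: eA_def sfam_def S_def T_def U_def)
  next
    fix cf :: "nat \<Rightarrow> nat \<Rightarrow> real"
    assume h: "\<And>a b c. (a,b,c) \<in> {(1,1,t),(1,t,1),(t,1,1),(s,1,1),(1,s,1),(1,1,s)} \<Longrightarrow> hq cf a b c = 0"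
    have "(-((t-1)^2*(s-1)^2*(t-s)^3*(2*t*s+s+t-4))) * cf 5 0 = 0"
      by (rule linA) (rule h; simp)+
    then show "cf 5 0 = 0" using Dne by simp
  next
    fix a b c assume "(a,b,c) \<in> {(1,1,t),(1,t,1),(t,1,1),(s,1,1),(1,s,1),(1,1,s)}"
    then show "a > 0 \<and> b \<ge> 0 \<and> c \<ge> 0 \<and> eA t u a b c = 0"
      using t0 sp z1 z2 z3 z4 by auto
  qed
qed

lemma muB_pos: assumes "t > 2" shows "muB t > 0"
proof -
  have "(t-1)*(t+2) \<ge> t^2" using assms by (simp add: algebra_simps power2_eq_square)
  then have "sqrt ((t-1)*(t+2)) \<ge> sqrt (t^2)" by (rule real_sqrt_le_mono)
  then have sq: "sqrt ((t-1)*(t+2)) \<ge> t" using assms by simp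
  have "t * sqrt ((t-1)*(t+2)) \<ge> t * t" using sq assms by (intro mult_left_mono) auto
  then have R2: "muR t \<ge> 2" unfolding muR_def by (simp add: power2_eq_square)
  have "(muR t)^2 - 4 < (muR t)^2" by simp
  then have "sqrt ((muR t)^2 - 4) < sqrt ((muR t)^2)" by (rule real_sqrt_less_mono)
  then have "sqrt ((muR t)^2 - 4) < muR t" using R2 by simp
  then show ?thesis unfolding muB_def by simp
qed

lemma partB:
  fixes t u :: real
  assumes t2: "t > 2" and uB: "muB t < u" "u < 1" and bne: "bB1 t (omega u) \<noteq> 0"
  shows "\<not> Sigma_3_10 (\<lambda>a b c. eB t u (a^2) (b^2) (c^2))"
proof -
  have up: "u > 0" using muB_pos[OF t2] uB by simp
  have t0: "t > 0" using t2 by simp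
  have w: "omega u * u = (u-1)^2" unfolding omega_def using up by (simp add: field_simps power2_eq_square)
  have Bu: "(2*t+1)*(u-1)^2-t*(t-4)*u = u * bB1 t (omega u)" unfolding bB1_def using w by algebra
  have Dne: "(t-1)*u*(u+1)^2*(u-1)^2*((2*t+1)*(u-1)^2-t*(t-4)*u) \<noteq> 0"
    unfolding Bu using t2 up uB bne by simp
  have z1: "eB t u 1 1 t = 0" using eB_NB[OF t0] NB1 by simp
  have "u^2 * NB t (omega u) 1 u 0 = 0" using NB2 w by simp
  then have z2: "eB t u 1 u 0 = 0" using eB_NB[OF t0] up by simp
  have "u^2 * NB t (omega u) u 1 0 = 0" using NB3 w by simp
  then have z3: "eB t u u 1 0 = 0" using eB_NB[OF t0] up by simp
  have z4: "eB t u 1 t 1 = 0" "eB t u t 1 1 = 0" using z1 eB_cyc[of t u 1 t 1] eB_cyc[of t u t 1 1] by simp_all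
  have z5: "eB t u 1 0 u = 0" "eB t u u 0 1 = 0"
    using z2 z3 eB_cyc[of t u 1 0 u] eB_cyc[of t u 0 u 1] eB_cyc[of t u u 0 1] eB_cyc[of t u 0 1 u] by simp_all
  show ?thesis
  proof (rule general_nonsos[where Z = "{(1,t,1),(t,1,1),(1,u,0),(u,1,0),(1,0,u),(u,0,1)}"])
    show "eB t u 1 0 0 \<noteq> 0" by (simp add: eB_def Let_def sfam_def S_def T_def U_def)
  next
    fix cf :: "nat \<Rightarrow> nat \<Rightarrow> real"
    assume h: "\<And>a b c. (a,b,c) \<in> {(1,t,1),(t,1,1),(1,u,0),(u,1,0),(1,0,u),(u,0,1)} \<Longrightarrow> hq cf a b c = 0"
    have "((t-1)*u*(u+1)^2*(u-1)^2*((2*t+1)*(u-1)^2-t*(t-4)*u)) * cf 5 0 = 0"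
      by (rule linB) (rule h; simp)+
    then show "cf 5 0 = 0" using Dne by simp
  next
    fix a b c assume "(a,b,c) \<in> {(1,t,1),(t,1,1),(1,u,0),(u,1,0),(1,0,u),(u,0,1)}"
    then show "a > 0 \<and> b \<ge> 0 \<and> c \<ge> 0 \<and> eB t u a b c = 0"
      using t0 up z2 z3 z4 z5 by auto
  qed
qed

theorem theorem4p26:
  shows "(\<forall>t u :: real. 0 < t \<and> t < 7 \<and> t \<noteq> 1 \<and> 0 < u \<and> u < muA t
            \<and> u \<noteq> 3 * (t - 1)^2 * (t + 2) / (2 * t + 1)
          \<longrightarrow> \<not> Sigma_3_10 (\<lambda>a b c. eA t u (a^2) (b^2) (c^2)))
       \<and> (\<forall>t u :: real. t > 2 \<and> muB t < u \<and> u < 1 \<and> bB1 t (omega u) \<noteq> 0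
          \<longrightarrow> \<not> Sigma_3_10 (\<lambda>a b c. eB t u (a^2) (b^2) (c^2)))"
  using partA partB by blast

end
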